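(* Every regular normal extremal that is time-optimal for the problem below begins with an $X$-arc; that is, the control $A$ equals $X$ on some interval $[0,\delta)$, $\delta>0$.
   Context: Fix $\gamma\in(0,\pi/2)$, $s=\sin\gamma$, $c=\cos\gamma$, and $X=\begin{pmatrix}0&s^2&sc\\-s^2&0&0\\-sc&0&0\end{pmatrix}$, $Y=\begin{pmatrix}0&1&0\\-1&0&0\\0&0&0\end{pmatrix}$ on $\mathbb R^3$ with standard basis $e_1,e_2,e_3$ and standard inner product. Let $\Sigma=\{\psi:\langle e_3,\psi\rangle=0\}$, $\psi_0=(0,s,c)^\top$ (the large-block limit of the uniform superposition). Time-optimal problem: over piecewise constant controls $A:[0,T]\to\{X,Y\}$ with finitely many discontinuities (switching times) and trajectories $\dot\psi=A(t)\psi$, $\psi(0)=\psi_0$, minimize $T$ subject to $\psi(T)\in\Sigma$. Maximal intervals on which $A\equiv X$ are $X$-arcs. A normal extremal is such a trajectory with a nonzero absolutely continuous costate $p$ satisfying $\dot p=-A(t)^\top p$ and, for a.e. $t$, $\langle p,A(t)\psi\rangle-1=\max_{B\in\{X,Y\}}(\langle p,B\psi\rangle-1)$. With $\phi_1=\langle p,(X-Y)\psi\rangle$ and $\phi_2=\langle p,[X,Y]\psi\rangle$, a normal extremal is regular (bang–bang) if $\phi_1$ vanishes only at isolated times and at every switching time $\phi_1=0$ and $\phi_2\neq0$. *)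

theory Defs
  imports "HOL-Analysis.Analysis"
begin

definition Xmat :: "real \<Rightarrow> real^3^3" where
  "Xmat \<gamma> = (let s = sin \<gamma>; c = cos \<gamma> in
     vector [vector [0, s^2, s*c], vector [- (s^2), 0, 0], vector [- (s*c), 0, 0]])"

definition Ymat :: "real^3^3" where
  "Ymat = vector [vector [0, 1, 0], vector [-1, 0, 0], vector [0, 0, 0]]"

definition psi0 :: "real \<Rightarrow> real^3" where
  "psi0 \<gamma> = vector [0, sin \<gamma>, cos \<gamma>]"

definition Sigma_set :: "(real^3) set" where
  "Sigma_set = {\<psi>. (axis 3 1 :: real^3) \<bullet> \<psi> = 0}"

text \<open>Piecewise constant control on [0,T] with values in {X,Y} and finitely many
  discontinuities; convention: A is constant on half-open intervals [t_i, t_(i+1)).\<close>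
definition admissible_control :: "real \<Rightarrow> real \<Rightarrow> (real \<Rightarrow> real^3^3) \<Rightarrow> bool" where
  "admissible_control \<gamma> T A \<longleftrightarrow> 0 \<le> T \<and>
     (\<forall>t\<in>{0..T}. A t = Xmat \<gamma> \<or> A t = Ymat) \<and>
     (\<forall>t\<in>{0..<T}. \<exists>\<epsilon>>0. \<forall>u\<in>{t..<t+\<epsilon>}. A u = A t) \<and>
     (\<exists>S. finite S \<and> (\<forall>t\<in>{0<..<T} - S. \<exists>\<epsilon>>0. \<forall>u\<in>{t-\<epsilon><..<t+\<epsilon>}. A u = A t))"

definition switching_time :: "real \<Rightarrow> (real \<Rightarrow> real^3^3) \<Rightarrow> real \<Rightarrow> bool" where
  "switching_time T A t \<longleftrightarrow> t \<in> {0<..<T} \<and>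
     \<not> (\<exists>\<epsilon>>0. \<forall>u\<in>{t-\<epsilon><..<t+\<epsilon>}. A u = A t)"

definition solves_ode :: "real \<Rightarrow> (real \<Rightarrow> real^3^3) \<Rightarrow> (real \<Rightarrow> real^3) \<Rightarrow> bool" where
  "solves_ode T A \<psi> \<longleftrightarrow> continuous_on {0..T} \<psi> \<and>
     (\<exists>S. finite S \<and> (\<forall>t\<in>{0..T} - S.
        (\<psi> has_vector_derivative (A t *v \<psi> t)) (at t within {0..T})))"

definition feasible :: "real \<Rightarrow> real \<Rightarrow> (real \<Rightarrow> real^3^3) \<Rightarrow> (real \<Rightarrow> real^3) \<Rightarrow> bool" where
  "feasible \<gamma> T A \<psi> \<longleftrightarrow> admissible_control \<gamma> T A \<and> solves_ode T A \<psi> \<and>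
     \<psi> 0 = psi0 \<gamma> \<and> \<psi> T \<in> Sigma_set"

definition time_optimal :: "real \<Rightarrow> real \<Rightarrow> (real \<Rightarrow> real^3^3) \<Rightarrow> (real \<Rightarrow> real^3) \<Rightarrow> bool" where
  "time_optimal \<gamma> T A \<psi> \<longleftrightarrow> feasible \<gamma> T A \<psi> \<and>
     (\<forall>T' A' \<psi>'. feasible \<gamma> T' A' \<psi>' \<longrightarrow> T \<le> T')"

definition normal_extremal_costate ::
  "real \<Rightarrow> real \<Rightarrow> (real \<Rightarrow> real^3^3) \<Rightarrow> (real \<Rightarrow> real^3) \<Rightarrow> (real \<Rightarrow> real^3) \<Rightarrow> bool" where
  "normal_extremal_costate \<gamma> T A \<psi> p \<longleftrightarrow>
     feasible \<gamma> T A \<psi> \<and>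
     (\<exists>t\<in>{0..T}. p t \<noteq> 0) \<and>
     solves_ode T (\<lambda>t. - transpose (A t)) p \<and>
     (AE t in lborel. t \<in> {0..T} \<longrightarrow>
        p t \<bullet> (A t *v \<psi> t) - 1 =
          max (p t \<bullet> (Xmat \<gamma> *v \<psi> t) - 1) (p t \<bullet> (Ymat *v \<psi> t) - 1))"

definition phi1 :: "real \<Rightarrow> (real \<Rightarrow> real^3) \<Rightarrow> (real \<Rightarrow> real^3) \<Rightarrow> real \<Rightarrow> real" where
  "phi1 \<gamma> \<psi> p t = p t \<bullet> ((Xmat \<gamma> - Ymat) *v \<psi> t)"

definition phi2 :: "real \<Rightarrow> (real \<Rightarrow> real^3) \<Rightarrow> (real \<Rightarrow> real^3) \<Rightarrow> real \<Rightarrow> real" where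
  "phi2 \<gamma> \<psi> p t = p t \<bullet> ((Xmat \<gamma> ** Ymat - Ymat ** Xmat \<gamma>) *v \<psi> t)"

definition regular_normal_extremal ::
  "real \<Rightarrow> real \<Rightarrow> (real \<Rightarrow> real^3^3) \<Rightarrow> (real \<Rightarrow> real^3) \<Rightarrow> (real \<Rightarrow> real^3) \<Rightarrow> bool" where
  "regular_normal_extremal \<gamma> T A \<psi> p \<longleftrightarrow>
     normal_extremal_costate \<gamma> T A \<psi> p \<and>
     (\<forall>t\<in>{0..T}. phi1 \<gamma> \<psi> p t = 0 \<longrightarrow>
        (\<exists>\<epsilon>>0. \<forall>u\<in>{0..T}. 0 < \<bar>u - t\<bar> \<and> \<bar>u - t\<bar> < \<epsilon> \<longrightarrow> phi1 \<gamma> \<psi> p u \<noteq> 0)) \<and>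
     (\<forall>t. switching_time T A t \<longrightarrow> phi1 \<gamma> \<psi> p t = 0 \<and> phi2 \<gamma> \<psi> p t \<noteq> 0)"

end

theory Submission
  imports Defs
begin

lemma cont_comp: "continuous_on S f \<Longrightarrow> continuous_on S (\<lambda>x. (f x :: real^3) $ i)"
  by (intro continuous_intros)

lemma mono_fin0:
  fixes f :: "real \<Rightarrow> real"
  assumes "finite S"
  shows "\<forall>a b. a \<le> b \<longrightarrow> continuous_on {a..b} f \<longrightarrow>
     (\<forall>x\<in>{a<..<b} - S. \<exists>y. DERIV f x :> y \<and> 0 \<le> y) \<longrightarrow> f a \<le> f b"
  using assms
proof induction
  case empty
  show ?case
  proof (intro allI impI)
    fix a b :: real
    assume H: "a \<le> b" "continuous_on {a..b} f" "\<forall>x\<in>{a<..<b} - {}. \<exists>y. DERIV f x :> y \<and> 0 \<le> y"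
    show "f a \<le> f b"
      by (rule DERIV_nonneg_imp_increasing_open[OF H(1) _ H(2)]) (use H(3) in auto)
  qed
next
  case (insert x S)
  show ?case
  proof (intro allI impI)
    fix a b :: real
    assume H: "a \<le> b" "continuous_on {a..b} f" "\<forall>y\<in>{a<..<b} - insert x S. \<exists>d. DERIV f y :> d \<and> 0 \<le> d"
    show "f a \<le> f b"
    proof (cases "x \<in> {a<..<b}")
      case True
      have c1: "continuous_on {a..x} f" by (rule continuous_on_subset[OF H(2)]) (use True in auto)
      have c2: "continuous_on {x..b} f" by (rule continuous_on_subset[OF H(2)]) (use True in auto)
      have d1: "\<forall>y\<in>{a<..<x} - S. \<exists>d. DERIV f y :> d \<and> 0 \<le> d" using H(3) True by auto
      have d2: "\<forall>y\<in>{x<..<b} - S. \<exists>d. DERIV f y :> d \<and> 0 \<le> d" using H(3) True by auto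
      have "f a \<le> f x" using insert.IH c1 d1 True by auto
      moreover have "f x \<le> f b" using insert.IH c2 d2 True by auto
      ultimately show ?thesis by simp
    next
      case False
      have d: "\<forall>y\<in>{a<..<b} - S. \<exists>d. DERIV f y :> d \<and> 0 \<le> d" using H(3) False by auto
      show ?thesis using insert.IH H(1,2) d by auto
    qed
  qed
qed

lemma mono_fin:
  fixes f :: "real \<Rightarrow> real"
  assumes "finite S" "a \<le> b" "continuous_on {a..b} f"
     "\<And>x. x \<in> {a<..<b} \<Longrightarrow> x \<notin> S \<Longrightarrow> \<exists>y. DERIV f x :> y \<and> 0 \<le> y"
  shows "f a \<le> f b"
  using mono_fin0[OF assms(1), of f] assms(2-4) by blast

lemma const_fin:
  fixes f :: "real \<Rightarrow> real"
  assumes "finite S" "continuous_on {a..b} f"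
    "\<And>x. x \<in> {a<..<b} \<Longrightarrow> x \<notin> S \<Longrightarrow> DERIV f x :> 0"
    "t \<in> {a..b}"
  shows "f t = f a"
proof -
  have c1: "continuous_on {a..t} f" by (rule continuous_on_subset[OF assms(2)]) (use assms(4) in auto)
  have "f a \<le> f t"
  proof (rule mono_fin[OF assms(1), where f=f and a=a and b=t])
    show "a \<le> t" using assms(4) by simp
    show "continuous_on {a..t} f" by (rule c1)
  next
    fix x assume "x \<in> {a<..<t}" "x \<notin> S"
    hence "DERIV f x :> 0" using assms(3,4) by auto
    thus "\<exists>y. DERIV f x :> y \<and> 0 \<le> y" by auto
  qed
  moreover have "- f a \<le> - f t"
  proof (rule mono_fin[OF assms(1), where f="\<lambda>x. - f x" and a=a and b=t])
    show "a \<le> t" using assms(4) by simp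
    show "continuous_on {a..t} (\<lambda>x. - f x)" using c1 by (intro continuous_intros)
  next
    fix x assume "x \<in> {a<..<t}" "x \<notin> S"
    hence "DERIV f x :> 0" using assms(3,4) by auto
    hence "DERIV (\<lambda>x. - f x) x :> - 0" by (rule DERIV_minus)
    thus "\<exists>y. DERIV (\<lambda>x. - f x) x :> y \<and> 0 \<le> y" by auto
  qed
  ultimately show ?thesis by simp
qed

lemma comparison:
  fixes z z' :: "real \<Rightarrow> real"
  assumes ab: "a \<le> b" and s: "0 < s" "s < s'" and phi: "0 \<le> phz" "phz + s' * (b - a) < pi/2"
    and za: "cos phz < z a" and cont: "continuous_on {a..b} z" and fin: "finite S"
    and der: "\<And>t. t \<in> {a<..<b} \<Longrightarrow> t \<notin> S \<Longrightarrow> (z has_real_derivative z' t) (at t)"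
    and bnd: "\<And>t. t \<in> {a<..<b} \<Longrightarrow> t \<notin> S \<Longrightarrow> 0 < z t \<Longrightarrow> - s * sqrt (1 - (z t)^2) \<le> z' t"
    and t: "t \<in> {a..b}"
  shows "cos (phz + s' * (t - a)) < z t"
proof (rule ccontr)
  assume neg: "\<not> ?thesis"
  define g where "g u = z u - cos (phz + s' * (u - a))" for u
  have contg: "continuous_on {a..b} g"
    unfolding g_def by (intro continuous_intros cont)
  define K where "K = {a..t} \<inter> g -` {..0}"
  have tK: "t \<in> K" using neg t unfolding K_def g_def by auto
  have clK: "closed K" unfolding K_def
  proof (rule continuous_closed_preimage)
    show "continuous_on {a..t} g" by (rule continuous_on_subset[OF contg]) (use t in auto)
  qed auto
  have bK: "bdd_below K" unfolding K_def by (auto intro: bdd_belowI[of _ a])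
  define t1 where "t1 = Inf K"
  have t1K: "t1 \<in> K" unfolding t1_def using closed_contains_Inf[OF _ bK clK] tK by auto
  hence t1: "a \<le> t1" "t1 \<le> t" "g t1 \<le> 0" unfolding K_def by auto
  have ga: "0 < g a" using za unfolding g_def by simp
  have pos: "0 < g u" if "a \<le> u" "u < t1" for u
  proof (rule ccontr)
    assume "\<not> 0 < g u"
    hence "u \<in> K" unfolding K_def using that t1 by auto
    hence "t1 \<le> u" unfolding t1_def using bK by (simp add: cInf_lower)
    thus False using that by simp
  qed
  have "g a \<le> g t1"
  proof (rule mono_fin[OF fin, where f=g and a=a and b=t1])
    show "a \<le> t1" by fact
    show "continuous_on {a..t1} g" by (rule continuous_on_subset[OF contg]) (use t1 t in auto)
  next
    fix u assume u: "u \<in> {a<..<t1}" "u \<notin> S"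
    have ub: "u \<in> {a<..<b}" using u t1 t by auto
    define ph where "ph = phz + s' * (u - a)"
    have ph: "0 < ph" "ph < pi/2"
    proof -
      have "0 < s' * (u - a)" using u s by (intro mult_pos_pos) auto
      thus "0 < ph" unfolding ph_def using phi by linarith
      have "s' * (u - a) \<le> s' * (b - a)" using u ub s by (intro mult_left_mono) auto
      thus "ph < pi/2" unfolding ph_def using phi by simp
    qed
    have cph: "0 < cos ph" using ph by (intro cos_gt_zero) auto
    have sph: "0 < sin ph" using ph by (intro sin_gt_zero) auto
    have gu: "0 < g u" using pos u by auto
    hence zc: "cos ph < z u" unfolding g_def ph_def by simp
    hence zpos: "0 < z u" using cph by simp
    have "(cos ph)^2 < (z u)^2" using zc cph by (intro power_strict_mono) auto
    hence "1 - (z u)^2 \<le> (sin ph)^2" by (simp add: sin_squared_eq)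
    hence "sqrt (1 - (z u)^2) \<le> sqrt ((sin ph)^2)" by (rule real_sqrt_le_mono)
    also have "sqrt ((sin ph)^2) = sin ph" using sph by simp
    finally have sq: "sqrt (1 - (z u)^2) \<le> sin ph" .
    have "s * sqrt (1 - (z u)^2) \<le> s * sin ph" using sq s by (intro mult_left_mono) auto
    moreover have "- s * sqrt (1 - (z u)^2) \<le> z' u" using bnd[OF ub u(2) zpos] .
    moreover have "s * sin ph \<le> s' * sin ph" using s sph by (intro mult_right_mono) auto
    ultimately have nn: "0 \<le> z' u + s' * sin ph" by linarith
    have dc: "DERIV (\<lambda>u. cos (phz + s' * (u - a))) u :> - sin ph * s'"
    proof -
      have "DERIV (\<lambda>u. phz + s' * (u - a)) u :> 0 + s' * (1 - 0)"
        by (intro DERIV_add DERIV_const DERIV_cmult DERIV_diff DERIV_ident)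
      thus ?thesis unfolding ph_def using DERIV_fun_cos by fastforce
    qed
    have "DERIV g u :> z' u - (- sin ph * s')"
      unfolding g_def by (rule DERIV_diff[OF der[OF ub u(2)] dc])
    thus "\<exists>y. DERIV g u :> y \<and> 0 \<le> y" using nn by (auto simp: mult.commute)
  qed
  thus False using ga t1 by simp
qed

lemma concav:
  assumes "0 < s" "s < 1" "0 < x" "x \<le> pi"
  shows "s^2 * (1 - cos x) < 1 - cos (s * x)"
proof -
  have g: "s * sin y < sin (s * y)" if y: "0 < y" "y \<le> pi" for y
  proof -
    define G where "G u = sin (s*u) - s * sin u" for u
    have "G 0 < G y"
    proof (rule DERIV_pos_imp_increasing_open[where f=G])
      show "0 < y" by fact
    next
      fix u assume u: "0 < u" "u < y"
      have "s * u < u" using u assms by simp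
      hence "cos u < cos (s*u)"
        using u y assms by (intro cos_monotone_0_pi) auto
      moreover have "DERIV G u :> cos (s*u) * s - s * cos u"
        unfolding G_def by (rule derivative_eq_intros refl)+ simp
      ultimately show "\<exists>d. DERIV G u :> d \<and> 0 < d"
        using assms by (intro exI[of _ "cos (s*u) * s - s * cos u"]) (auto simp: algebra_simps)
    next
      show "continuous_on {0..y} G" unfolding G_def by (intro continuous_intros)
    qed
    thus ?thesis by (simp add: G_def)
  qed
  define F where "F u = 1 - cos (s*u) - s^2 * (1 - cos u)" for u
  have "F 0 < F x"
  proof (rule DERIV_pos_imp_increasing_open[where f=F])
    show "0 < x" by fact
  next
    fix u assume u: "0 < u" "u < x"
    have "s * sin u < sin (s*u)" using g[of u] u assms by auto
    moreover have "DERIV F u :> sin (s*u) * s - s^2 * sin u"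
      unfolding F_def by (rule derivative_eq_intros refl)+ (simp add: algebra_simps)
    ultimately show "\<exists>d. DERIV F u :> d \<and> 0 < d"
      using assms by (intro exI[of _ "sin (s*u) * s - s^2 * sin u"])
        (auto simp: power2_eq_square algebra_simps)
  next
    show "continuous_on {0..x} F" unfolding F_def by (intro continuous_intros)
  qed
  thus ?thesis by (simp add: F_def)
qed


lemma sq3: "(x::real)^2 + y^2 + z^2 = 0 \<Longrightarrow> x = 0 \<and> y = 0 \<and> z = 0"
  by (smt (verit) power2_less_eq_zero_iff zero_le_power2)

lemma X1: "(Xmat g *v v) $ 1 = sin g ^2 * v$2 + sin g * cos g * v$3"
  by (simp add: Xmat_def Let_def matrix_vector_mult_def sum_3)
lemma X2: "(Xmat g *v v) $ 2 = - (sin g ^2 * v$1)"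
  by (simp add: Xmat_def Let_def matrix_vector_mult_def sum_3)
lemma X3: "(Xmat g *v v) $ 3 = - (sin g * cos g * v$1)"
  by (simp add: Xmat_def Let_def matrix_vector_mult_def sum_3)
lemma Y1: "(Ymat *v v) $ 1 = v$2" and Y2: "(Ymat *v v) $ 2 = - v$1" and Y3: "(Ymat *v v) $ 3 = 0"
  by (simp_all add: Ymat_def matrix_vector_mult_def sum_3)
lemma psi0_comp: "psi0 g $ 1 = 0" "psi0 g $ 2 = sin g" "psi0 g $ 3 = cos g"
  by (simp_all add: psi0_def)
lemma e3_inner: "axis 3 1 \<bullet> (v::real^3) = v $ 3"
  by (simp add: inner_axis')

lemma comp_deriv:
  assumes "(f has_vector_derivative (d::real^3)) (at t)"
  shows "((\<lambda>t. f t $ i) has_real_derivative d $ i) (at t)"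
proof -
  have "((\<lambda>t. f t $ i) has_vector_derivative d $ i) (at t)"
    by (rule bounded_linear.has_vector_derivative[OF bounded_linear_vec_nth assms])
  thus ?thesis by (simp add: has_real_derivative_iff_has_vector_derivative)
qed

lemma pureX_feasible:
  assumes "0 < g" "g < pi/2"
  shows "feasible g (pi / (2 * sin g)) (\<lambda>t. Xmat g)
           (\<lambda>t. sin (sin g * t) *\<^sub>R axis 1 1 + cos (sin g * t) *\<^sub>R psi0 g)"
proof -
  let ?s = "sin g" and ?c = "cos g"
  have s: "0 < ?s" using assms by (intro sin_gt_zero) auto
  have sc: "?s^2 + ?c^2 = 1" by simp
  define P where "P t = sin (?s * t) *\<^sub>R axis 1 1 + cos (?s * t) *\<^sub>R psi0 g" for t
  have dP: "(P has_vector_derivative Xmat g *v P t) (at t)" for t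
  proof -
    have "(P has_vector_derivative
        (cos (?s * t) * ?s) *\<^sub>R axis 1 1 + (- sin (?s * t) * ?s) *\<^sub>R psi0 g) (at t)"
    proof -
      have d0: "DERIV (\<lambda>t. ?s * t) t :> ?s * 1" by (rule DERIV_cmult[OF DERIV_ident])
      have d1: "DERIV (\<lambda>t. sin (?s * t)) t :> cos (?s * t) * (?s * 1)" by (rule DERIV_fun_sin[OF d0])
      have d2: "DERIV (\<lambda>t. cos (?s * t)) t :> - sin (?s * t) * (?s * 1)" by (rule DERIV_fun_cos[OF d0])
      have "((\<lambda>t. sin (?s * t) *\<^sub>R axis 1 1) has_vector_derivative
          sin (?s * t) *\<^sub>R 0 + (cos (?s * t) * (?s * 1)) *\<^sub>R (axis 1 1 :: real^3)) (at t)"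
        by (rule has_vector_derivative_scaleR[OF d1 has_vector_derivative_const])
      moreover have "((\<lambda>t. cos (?s * t) *\<^sub>R psi0 g) has_vector_derivative
          cos (?s * t) *\<^sub>R 0 + (- sin (?s * t) * (?s * 1)) *\<^sub>R psi0 g) (at t)"
        by (rule has_vector_derivative_scaleR[OF d2 has_vector_derivative_const])
      ultimately have "((\<lambda>t. sin (?s * t) *\<^sub>R axis 1 1 + cos (?s * t) *\<^sub>R psi0 g) has_vector_derivative
          (sin (?s * t) *\<^sub>R 0 + (cos (?s * t) * (?s * 1)) *\<^sub>R (axis 1 1 :: real^3)) +
          (cos (?s * t) *\<^sub>R 0 + (- sin (?s * t) * (?s * 1)) *\<^sub>R psi0 g)) (at t)"
        by (rule has_vector_derivative_add)
      thus ?thesis unfolding P_def by simp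
    qed
    moreover have "(cos (?s * t) * ?s) *\<^sub>R axis 1 1 + (- sin (?s * t) * ?s) *\<^sub>R psi0 g
        = Xmat g *v P t"
    proof -
      have P1: "P t $ 1 = sin (?s * t)" and P2: "P t $ 2 = ?s * cos (?s * t)"
        and P3: "P t $ 3 = ?c * cos (?s * t)"
        by (simp_all add: P_def axis_def psi0_comp)
      have "?s^2 * (?s * cos (?s * t)) + ?s * ?c * (?c * cos (?s * t)) = cos (?s * t) * ?s * (?s^2 + ?c^2)"
        by algebra
      hence e1: "?s^2 * (?s * cos (?s * t)) + ?s * ?c * (?c * cos (?s * t)) = cos (?s * t) * ?s"
        using sc by simp
      show ?thesis
        by (simp add: vec_eq_iff forall_3 X1 X2 X3 P1 P2 P3 psi0_comp axis_def e1 power2_eq_square[symmetric])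
    qed
    ultimately show ?thesis by simp
  qed
  have P0: "P 0 = psi0 g" unfolding P_def by simp
  have PT: "P (pi / (2 * ?s)) \<in> Sigma_set"
  proof -
    have "?s * (pi / (2 * ?s)) = pi / 2" using s by (simp add: field_simps)
    hence "P (pi / (2 * ?s)) $ 3 = 0" using s by (simp add: P_def axis_def psi0_comp)
    thus ?thesis unfolding Sigma_set_def e3_inner by simp
  qed
  have Tpos: "0 \<le> pi / (2 * ?s)" using s by simp
  have adm: "admissible_control g (pi / (2 * ?s)) (\<lambda>t. Xmat g)"
    unfolding admissible_control_def using Tpos zero_less_one finite.emptyI by blast
  have cont: "continuous_on {0..pi / (2 * ?s)} P" unfolding P_def by (intro continuous_intros)
  have ode: "solves_ode (pi / (2 * ?s)) (\<lambda>t. Xmat g) P"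
    unfolding solves_ode_def using cont has_vector_derivative_at_within[OF dP] finite.emptyI by blast
  show ?thesis unfolding feasible_def using adm ode P0 PT unfolding P_def by simp
qed


lemma DERIV_sq3:
  assumes "DERIV f x :> f'" "DERIV g x :> g'" "DERIV h x :> h'"
  shows "DERIV (\<lambda>x. (f x)^2 + (g x)^2 + (h x)^2) x :> 2 * f x * f' + 2 * g x * g' + 2 * h x * h'"
proof -
  have a: "DERIV (\<lambda>x. (f x)^2) x :> 2 * f x * f'"
    using DERIV_power[OF assms(1), of 2] by (simp add: algebra_simps)
  have b: "DERIV (\<lambda>x. (g x)^2) x :> 2 * g x * g'"
    using DERIV_power[OF assms(2), of 2] by (simp add: algebra_simps)
  have c: "DERIV (\<lambda>x. (h x)^2) x :> 2 * h x * h'"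
    using DERIV_power[OF assms(3), of 2] by (simp add: algebra_simps)
  show ?thesis by (rule DERIV_add[OF DERIV_add[OF a b] c])
qed

theorem lemmaA2:
  fixes \<gamma> T :: real and A :: "real \<Rightarrow> real^3^3" and \<psi> p :: "real \<Rightarrow> real^3"
  assumes "0 < \<gamma>" and "\<gamma> < pi / 2"
    and "regular_normal_extremal \<gamma> T A \<psi> p"
    and "time_optimal \<gamma> T A \<psi>"
  shows "\<exists>\<delta>>0. \<delta> \<le> T \<and> (\<forall>t\<in>{0..<\<delta>}. A t = Xmat \<gamma>)"
proof -
  define s where "s = sin \<gamma>"
  define c where "c = cos \<gamma>"
  have s0: "0 < s" unfolding s_def using assms(1,2) by (intro sin_gt_zero) auto
  have c0: "0 < c" unfolding c_def using assms(1,2) by (intro cos_gt_zero) auto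
  have sc: "s^2 + c^2 = 1" unfolding s_def c_def by simp
  have s1: "s < 1"
  proof -
    have "s \<le> 1" unfolding s_def by simp
    moreover have "s \<noteq> 1"
    proof
      assume "s = 1"
      hence "c^2 = 0" using sc by simp
      thus False using c0 by simp
    qed
    ultimately show ?thesis by simp
  qed
  note X1' = X1[of \<gamma>, folded s_def c_def]
  note X2' = X2[of \<gamma>, folded s_def c_def]
  note X3' = X3[of \<gamma>, folded s_def c_def]
  have feas: "feasible \<gamma> T A \<psi>" using assms(4) unfolding time_optimal_def by blast
  have opt: "\<And>T' A' \<psi>'. feasible \<gamma> T' A' \<psi>' \<Longrightarrow> T \<le> T'"
    using assms(4) unfolding time_optimal_def by blast
  have TX: "T \<le> pi / (2 * s)" using opt[OF pureX_feasible[OF assms(1,2)]] unfolding s_def .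
  have sT: "s * T \<le> pi / 2"
  proof -
    have "s * T \<le> s * (pi / (2 * s))" using TX s0 by (intro mult_left_mono) auto
    also have "\<dots> = pi / 2" using s0 by (simp add: field_simps)
    finally show ?thesis .
  qed
  have adm: "admissible_control \<gamma> T A" using feas unfolding feasible_def by blast
  have ode: "solves_ode T A \<psi>" using feas unfolding feasible_def by blast
  have init: "\<psi> 0 = psi0 \<gamma>" using feas unfolding feasible_def by blast
  have finT: "\<psi> T \<in> Sigma_set" using feas unfolding feasible_def by blast
  have T0: "0 \<le> T" using adm unfolding admissible_control_def by blast
  have fin3: "\<psi> T $ 3 = 0" using finT unfolding Sigma_set_def e3_inner by simp
  have i1: "\<psi> 0 $ 1 = 0" and i2: "\<psi> 0 $ 2 = s" and i3: "\<psi> 0 $ 3 = c"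
    using init by (simp_all add: psi0_comp s_def c_def)
  have Tpos: "0 < T"
  proof (rule ccontr)
    assume "\<not> 0 < T"
    hence "T = 0" using T0 by simp
    hence "c = 0" using fin3 i3 by simp
    thus False using c0 by simp
  qed
  have AXY: "\<And>t. t \<in> {0..T} \<Longrightarrow> A t = Xmat \<gamma> \<or> A t = Ymat"
    using adm unfolding admissible_control_def by blast
  have rc: "\<forall>t\<in>{0..<T}. \<exists>\<epsilon>>0. \<forall>u\<in>{t..<t+\<epsilon>}. A u = A t"
    using adm unfolding admissible_control_def by blast
  obtain \<epsilon> where \<epsilon>0: "0 < \<epsilon>" and \<epsilon>A: "\<And>u. u \<in> {0..<0+\<epsilon>} \<Longrightarrow> A u = A 0"
    using rc Tpos by force
  show ?thesis
  proof (cases "A 0 = Xmat \<gamma>")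
    case True
    show ?thesis
    proof (intro exI conjI)
      show "0 < min \<epsilon> T" using \<epsilon>0 Tpos by simp
      show "min \<epsilon> T \<le> T" by simp
      show "\<forall>t\<in>{0..<min \<epsilon> T}. A t = Xmat \<gamma>" using \<epsilon>A True by auto
    qed
  next
    case False
    hence AY0: "A 0 = Ymat" using AXY[of 0] T0 by auto
    have False
    proof -
      obtain S where Sfin: "finite S"
        and Sder: "\<And>t. t \<in> {0..T} - S \<Longrightarrow> (\<psi> has_vector_derivative A t *v \<psi> t) (at t within {0..T})"
        using ode unfolding solves_ode_def by blast
      have cont: "continuous_on {0..T} \<psi>" using ode unfolding solves_ode_def by blast
      have dcomp: "((\<lambda>t. \<psi> t $ i) has_real_derivative (A t *v \<psi> t) $ i) (at t)"
        if t: "t \<in> {0<..<T}" "t \<notin> S" for t i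
      proof -
        have "(\<psi> has_vector_derivative A t *v \<psi> t) (at t within {0..T})" using Sder t by auto
        moreover have "at t within {0..T} = at t" using t by (intro at_within_Icc_at) auto
        ultimately show ?thesis by (intro comp_deriv) simp
      qed
      have ccomp: "continuous_on {0..T} (\<lambda>t. \<psi> t $ i)" for i using cont by (rule cont_comp)
      have AXYo: "A t = Xmat \<gamma> \<or> A t = Ymat" if "t \<in> {0<..<T}" for t using AXY that by auto
      have dX: "DERIV (\<lambda>t. \<psi> t $ 1) t :> s^2 * \<psi> t $ 2 + s * c * \<psi> t $ 3"
          "DERIV (\<lambda>t. \<psi> t $ 2) t :> - (s^2 * \<psi> t $ 1)"
          "DERIV (\<lambda>t. \<psi> t $ 3) t :> - (s * c * \<psi> t $ 1)"
        if "t \<in> {0<..<T}" "t \<notin> S" "A t = Xmat \<gamma>" for t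
        using dcomp[OF that(1,2), of 1] dcomp[OF that(1,2), of 2] dcomp[OF that(1,2), of 3] that(3)
        by (simp_all add: X1' X2' X3')
      have dY: "DERIV (\<lambda>t. \<psi> t $ 1) t :> \<psi> t $ 2"
          "DERIV (\<lambda>t. \<psi> t $ 2) t :> - \<psi> t $ 1"
          "DERIV (\<lambda>t. \<psi> t $ 3) t :> 0"
        if "t \<in> {0<..<T}" "t \<notin> S" "A t = Ymat" for t
        using dcomp[OF that(1,2), of 1] dcomp[OF that(1,2), of 2] dcomp[OF that(1,2), of 3] that(3)
        by (simp_all add: Y1 Y2 Y3)
      have norm1: "(\<psi> t $ 1)^2 + (\<psi> t $ 2)^2 + (\<psi> t $ 3)^2 = 1" if t: "t \<in> {0..T}" for t
      proof -
        have "(\<lambda>t. (\<psi> t $ 1)^2 + (\<psi> t $ 2)^2 + (\<psi> t $ 3)^2) t = (\<lambda>t. (\<psi> t $ 1)^2 + (\<psi> t $ 2)^2 + (\<psi> t $ 3)^2) 0"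
        proof (rule const_fin[OF Sfin, where a=0 and b=T])
          show "continuous_on {0..T} (\<lambda>t. (\<psi> t $ 1)^2 + (\<psi> t $ 2)^2 + (\<psi> t $ 3)^2)"
            by (intro continuous_intros ccomp)
          show "t \<in> {0..T}" by fact
        next
          fix u assume u: "u \<in> {0<..<T}" "u \<notin> S"
          show "DERIV (\<lambda>t. (\<psi> t $ 1)^2 + (\<psi> t $ 2)^2 + (\<psi> t $ 3)^2) u :> 0"
          proof (cases "A u = Xmat \<gamma>")
            case True
            have "DERIV (\<lambda>t. (\<psi> t $ 1)^2 + (\<psi> t $ 2)^2 + (\<psi> t $ 3)^2) u :>
                2 * \<psi> u $ 1 * (s^2 * \<psi> u $ 2 + s * c * \<psi> u $ 3) + 2 * \<psi> u $ 2 * (- (s^2 * \<psi> u $ 1))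
                + 2 * \<psi> u $ 3 * (- (s * c * \<psi> u $ 1))"
              by (rule DERIV_sq3[OF dX[OF u True]])
            moreover have "2 * \<psi> u $ 1 * (s^2 * \<psi> u $ 2 + s * c * \<psi> u $ 3) + 2 * \<psi> u $ 2 * (- (s^2 * \<psi> u $ 1))
                + 2 * \<psi> u $ 3 * (- (s * c * \<psi> u $ 1)) = 0" by algebra
            ultimately show ?thesis by simp
          next
            case False
            hence AY: "A u = Ymat" using AXYo[OF u(1)] by simp
            have "DERIV (\<lambda>t. (\<psi> t $ 1)^2 + (\<psi> t $ 2)^2 + (\<psi> t $ 3)^2) u :>
                2 * \<psi> u $ 1 * \<psi> u $ 2 + 2 * \<psi> u $ 2 * (- \<psi> u $ 1) + 2 * \<psi> u $ 3 * 0"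
              by (rule DERIV_sq3[OF dY[OF u AY]])
            moreover have "2 * \<psi> u $ 1 * \<psi> u $ 2 + 2 * \<psi> u $ 2 * (- \<psi> u $ 1) + 2 * \<psi> u $ 3 * 0 = 0"
              by algebra
            ultimately show ?thesis by simp
          qed
        qed
        thus ?thesis using i1 i2 i3 sc by simp
      qed
      define \<tau> where "\<tau> = min (min (\<epsilon>/2) (T/2)) 1"
      have \<tau>0: "0 < \<tau>" unfolding \<tau>_def using \<epsilon>0 Tpos by simp
      have \<tau>\<epsilon>: "\<tau> < \<epsilon>" unfolding \<tau>_def using \<epsilon>0 by linarith
      have \<tau>T: "\<tau> < T" unfolding \<tau>_def using Tpos by linarith
      have \<tau>1: "\<tau> \<le> 1" unfolding \<tau>_def by simp
      have \<tau>pi: "\<tau> \<le> pi" using \<tau>1 pi_gt3 by linarith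
      have AYarc: "A u = Ymat" if "u \<in> {0..\<tau>}" for u
        using \<epsilon>A[of u] that \<tau>\<epsilon> AY0 by auto
      have ccs: "continuous_on {a..b} (\<lambda>t. \<psi> t $ i)" if "0 \<le> a" "b \<le> T" for a b i
        by (rule continuous_on_subset[OF ccomp]) (use that in auto)
      have csub: "continuous_on {a..b} \<psi>" if "0 \<le> a" "b \<le> T" for a b
        by (rule continuous_on_subset[OF cont]) (use that in auto)
      define D where "D t = (\<psi> t $ 1 - s * sin t)^2 + (\<psi> t $ 2 - s * cos t)^2 + (\<psi> t $ 3 - c)^2" for t
      have D\<tau>: "D \<tau> = D 0"
      proof (rule const_fin[OF Sfin, where a=0 and b=\<tau>])
        show "continuous_on {0..\<tau>} D" unfolding D_def
          using csub[of 0 \<tau>] \<tau>T by (intro continuous_intros) auto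
        show "\<tau> \<in> {0..\<tau>}" using \<tau>0 by simp
      next
        fix u assume u: "u \<in> {0<..<\<tau>}" "u \<notin> S"
        have uT: "u \<in> {0<..<T}" using u \<tau>T by auto
        have AY: "A u = Ymat" using AYarc u by auto
        note d = dY[OF uT u(2) AY]
        have e1: "DERIV (\<lambda>t. \<psi> t $ 1 - s * sin t) u :> \<psi> u $ 2 - s * cos u"
          by (rule DERIV_diff[OF d(1) DERIV_cmult[OF DERIV_sin]])
        have e2: "DERIV (\<lambda>t. \<psi> t $ 2 - s * cos t) u :> - \<psi> u $ 1 - s * (- sin u)"
          by (rule DERIV_diff[OF d(2) DERIV_cmult[OF DERIV_cos]])
        have e3: "DERIV (\<lambda>t. \<psi> t $ 3 - c) u :> 0 - 0"
          by (rule DERIV_diff[OF d(3) DERIV_const])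
        have "DERIV D u :> 2 * (\<psi> u $ 1 - s * sin u) * (\<psi> u $ 2 - s * cos u)
            + 2 * (\<psi> u $ 2 - s * cos u) * (- \<psi> u $ 1 - s * (- sin u)) + 2 * (\<psi> u $ 3 - c) * (0 - 0)"
          unfolding D_def by (rule DERIV_sq3[OF e1 e2 e3])
        moreover have "2 * (\<psi> u $ 1 - s * sin u) * (\<psi> u $ 2 - s * cos u)
            + 2 * (\<psi> u $ 2 - s * cos u) * (- \<psi> u $ 1 - s * (- sin u)) + 2 * (\<psi> u $ 3 - c) * (0 - 0) = 0"
          by algebra
        ultimately show "DERIV D u :> 0" by simp
      qed
      have "D 0 = 0" unfolding D_def using i1 i2 i3 by simp
      hence "D \<tau> = 0" using D\<tau> by simp
      hence "\<psi> \<tau> $ 1 - s * sin \<tau> = 0 \<and> \<psi> \<tau> $ 2 - s * cos \<tau> = 0 \<and> \<psi> \<tau> $ 3 - c = 0"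
        unfolding D_def by (rule sq3)
      hence y2: "\<psi> \<tau> $ 2 = s * cos \<tau>" and y3: "\<psi> \<tau> $ 3 = c" by auto
      define \<beta> where "\<beta> t = s * \<psi> t $ 2 + c * \<psi> t $ 3" for t
      define \<nu> where "\<nu> t = c * \<psi> t $ 2 - s * \<psi> t $ 3" for t
      have \<beta>\<tau>: "\<beta> \<tau> = s^2 * cos \<tau> + c^2" unfolding \<beta>_def using y2 y3 by (simp add: power2_eq_square)
      have \<nu>\<tau>: "\<nu> \<tau> \<le> 0"
      proof -
        have "\<nu> \<tau> = s * c * (cos \<tau> - 1)" unfolding \<nu>_def using y2 y3 by (simp add: algebra_simps)
        moreover have "cos \<tau> - 1 \<le> 0" by simp
        moreover have "0 \<le> s * c" using s0 c0 by simp
        ultimately show ?thesis by (simp add: mult_nonneg_nonpos)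
      qed
      have \<beta>gt: "cos (s * \<tau>) < \<beta> \<tau>"
      proof -
        have "s^2 * (1 - cos \<tau>) < 1 - cos (s * \<tau>)" by (rule concav[OF s0 s1 \<tau>0 \<tau>pi])
        moreover have "s^2 * (1 - cos \<tau>) = s^2 - s^2 * cos \<tau>" by (simp add: algebra_simps)
        ultimately show ?thesis using \<beta>\<tau> sc by linarith
      qed
      have \<beta>le: "\<beta> \<tau> \<le> 1"
      proof -
        have "s^2 * cos \<tau> \<le> s^2 * 1" by (intro mult_left_mono) auto
        thus ?thesis using \<beta>\<tau> sc by linarith
      qed
      have \<beta>ge: "-1 \<le> \<beta> \<tau>"
      proof -
        have "s^2 * (-1) \<le> s^2 * cos \<tau>" by (intro mult_left_mono) auto
        moreover have "0 \<le> c^2" by simp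
        ultimately show ?thesis using \<beta>\<tau> sc by linarith
      qed
      define \<phi>a where "\<phi>a = arccos (\<beta> \<tau>)"
      have c\<phi>a: "cos \<phi>a = \<beta> \<tau>" unfolding \<phi>a_def using \<beta>le \<beta>ge by (rule cos_arccos[rotated])
      have \<phi>a0: "0 \<le> \<phi>a" unfolding \<phi>a_def using \<beta>le \<beta>ge by (intro arccos_lbound) auto
      have s\<tau>: "s * \<tau> < \<tau>" using s1 \<tau>0 by simp
      have s\<tau>pi: "s * \<tau> \<le> pi" using s\<tau> \<tau>pi by linarith
      have s\<tau>0: "0 \<le> s * \<tau>" using s0 \<tau>0 by simp
      have \<phi>alt: "\<phi>a < s * \<tau>"
      proof (rule ccontr)
        assume "\<not> \<phi>a < s * \<tau>"
        hence "s * \<tau> \<le> \<phi>a" by simp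
        moreover have "\<phi>a \<le> pi" unfolding \<phi>a_def using \<beta>le \<beta>ge by (intro arccos_ubound) auto
        ultimately have "cos \<phi>a \<le> cos (s * \<tau>)" using s\<tau>0 by (intro cos_monotone_0_pi_le) auto
        thus False using c\<phi>a \<beta>gt by simp
      qed
      define gap where "gap = s * \<tau> - \<phi>a"
      have gap0: "0 < gap" unfolding gap_def using \<phi>alt by simp
      define \<phi>0 where "\<phi>0 = \<phi>a + gap / 3"
      define s' where "s' = s + gap / (3 * (T - \<tau>))"
      have T\<tau>: "0 < T - \<tau>" using \<tau>T by simp
      have ss': "s < s'" unfolding s'_def using gap0 T\<tau> by simp
      have s'0: "0 < s'" using ss' s0 by simp
      have \<phi>00: "0 \<le> \<phi>0" unfolding \<phi>0_def using \<phi>a0 gap0 by simp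
      have key: "\<phi>0 + s' * (T - \<tau>) = s * T - gap / 3"
      proof -
        have "gap / (3 * (T - \<tau>)) * (T - \<tau>) = gap / 3" using T\<tau> by (simp add: field_simps)
        hence "s' * (T - \<tau>) = s * (T - \<tau>) + gap / 3" unfolding s'_def by (simp add: distrib_right)
        moreover have "s * (T - \<tau>) = s * T - s * \<tau>" by (simp add: algebra_simps)
        ultimately show ?thesis unfolding \<phi>0_def gap_def by (simp add: field_simps)
      qed
      have keylt: "\<phi>0 + s' * (T - \<tau>) < pi / 2" using key sT gap0 by linarith
      have cos\<phi>0: "cos \<phi>0 < \<beta> \<tau>"
      proof -
        have "\<phi>0 < s * \<tau>" using gap0 unfolding \<phi>0_def gap_def by (simp add: field_simps)
        hence "cos \<phi>0 < cos \<phi>a" using \<phi>a0 gap0 s\<tau>pi unfolding \<phi>0_def by (intro cos_monotone_0_pi) auto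
        thus ?thesis using c\<phi>a by simp
      qed
      have angle_ok: "0 < cos (\<phi>0 + s' * (t - \<tau>))" if "\<tau> \<le> t" "t \<le> T" for t
      proof -
        have "s' * (t - \<tau>) \<le> s' * (T - \<tau>)" using that s'0 by (intro mult_left_mono) auto
        moreover have "0 \<le> s' * (t - \<tau>)" using that s'0 by simp
        ultimately show ?thesis using keylt \<phi>00 by (intro cos_gt_zero_pi) auto
      qed
      have cont\<nu>: "continuous_on {\<tau>..T} \<nu>" unfolding \<nu>_def
        using csub[of \<tau> T] \<tau>0 by (intro continuous_intros) auto
      have cont\<beta>: "continuous_on {a..b} \<beta>" if "0 \<le> a" "b \<le> T" for a b unfolding \<beta>_def
        using csub[OF that] by (intro continuous_intros) auto
      define N where "N = {\<tau>..T} \<inter> \<nu> -` {..0}"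
      have clN: "closed N" unfolding N_def
        by (rule continuous_closed_preimage[OF cont\<nu> closed_atLeastAtMost closed_atMost])
      have \<tau>N: "\<tau> \<in> N" unfolding N_def using \<nu>\<tau> \<tau>T by auto
      have bN: "bdd_above N" unfolding N_def by (rule bdd_aboveI[of _ T]) auto
      define ts where "ts = Sup N"
      have tsN: "ts \<in> N" unfolding ts_def using closed_contains_Sup[OF _ bN clN] \<tau>N by auto
      hence ts: "\<tau> \<le> ts" "ts \<le> T" "\<nu> ts \<le> 0" unfolding N_def by auto
      have after: "0 < \<nu> t" if "ts < t" "t \<le> T" for t
      proof (rule ccontr)
        assume "\<not> 0 < \<nu> t"
        hence "t \<in> N" unfolding N_def using that ts by auto
        hence "t \<le> ts" unfolding ts_def using bN by (simp add: cSup_upper)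
        thus False using that by simp
      qed
      have d\<beta>: "DERIV \<beta> t :> - s * \<psi> t $ 1" if t: "t \<in> {0<..<T}" "t \<notin> S" for t
      proof (cases "A t = Xmat \<gamma>")
        case True
        have "DERIV \<beta> t :> s * (- (s^2 * \<psi> t $ 1)) + c * (- (s * c * \<psi> t $ 1))"
          unfolding \<beta>_def by (rule DERIV_add[OF DERIV_cmult[OF dX(2)[OF t True]] DERIV_cmult[OF dX(3)[OF t True]]])
        moreover have "s * (- (s^2 * \<psi> t $ 1)) + c * (- (s * c * \<psi> t $ 1)) = - s * \<psi> t $ 1 * (s^2 + c^2)"
          by algebra
        ultimately show ?thesis using sc by simp
      next
        case False
        hence AY: "A t = Ymat" using AXYo[OF t(1)] by simp
        have "DERIV \<beta> t :> s * (- \<psi> t $ 1) + c * 0"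
          unfolding \<beta>_def by (rule DERIV_add[OF DERIV_cmult[OF dY(2)[OF t AY]] DERIV_cmult[OF dY(3)[OF t AY]]])
        thus ?thesis by simp
      qed
      have b\<beta>: "- s * sqrt (1 - (\<beta> t)^2) \<le> - s * \<psi> t $ 1" if t: "t \<in> {0..T}" for t
      proof -
        have "(\<beta> t)^2 + (\<nu> t)^2 = (s^2 + c^2) * ((\<psi> t $ 2)^2 + (\<psi> t $ 3)^2)"
          unfolding \<beta>_def \<nu>_def by algebra
        hence "(\<beta> t)^2 + (\<nu> t)^2 = (\<psi> t $ 2)^2 + (\<psi> t $ 3)^2" using sc by simp
        moreover have "0 \<le> (\<nu> t)^2" by simp
        ultimately have "(\<psi> t $ 1)^2 \<le> 1 - (\<beta> t)^2" using norm1[OF t] by linarith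
        hence "\<psi> t $ 1 \<le> sqrt (1 - (\<beta> t)^2)" by (rule real_le_rsqrt)
        hence "s * \<psi> t $ 1 \<le> s * sqrt (1 - (\<beta> t)^2)" using s0 by (intro mult_left_mono) auto
        thus ?thesis by simp
      qed
      have comp1: "cos (\<phi>0 + s' * (ts - \<tau>)) < \<beta> ts"
      proof (rule comparison[where z=\<beta> and z'="\<lambda>t. - s * \<psi> t $ 1" and S=S and a=\<tau> and b=ts
            and s=s and s'=s' and phz=\<phi>0 and t=ts])
        show "\<tau> \<le> ts" by fact
        show "0 < s" by fact
        show "s < s'" by fact
        show "0 \<le> \<phi>0" by fact
        have "s' * (ts - \<tau>) \<le> s' * (T - \<tau>)" using ts s'0 by (intro mult_left_mono) auto
        thus "\<phi>0 + s' * (ts - \<tau>) < pi / 2" using keylt by linarith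
        show "cos \<phi>0 < \<beta> \<tau>" by fact
        show "continuous_on {\<tau>..ts} \<beta>" using cont\<beta>[of \<tau> ts] \<tau>0 ts by simp
        show "finite S" by fact
        show "ts \<in> {\<tau>..ts}" using ts by simp
      next
        fix t assume t: "t \<in> {\<tau><..<ts}" "t \<notin> S"
        have tT: "t \<in> {0<..<T}" using t \<tau>0 ts by auto
        show "DERIV \<beta> t :> - s * \<psi> t $ 1" by (rule d\<beta>[OF tT t(2)])
      next
        fix t assume t: "t \<in> {\<tau><..<ts}" "t \<notin> S" "0 < \<beta> t"
        have tT: "t \<in> {0..T}" using t \<tau>0 ts by auto
        show "- s * sqrt (1 - (\<beta> t)^2) \<le> - s * \<psi> t $ 1" by (rule b\<beta>[OF tT])
      qed
      show False
      proof (cases "ts = T")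
        case True
        have "\<nu> T \<le> 0" using ts True by simp
        hence "c * \<psi> T $ 2 \<le> 0" unfolding \<nu>_def using fin3 by simp
        hence "\<psi> T $ 2 \<le> 0" using c0 by (simp add: mult_le_0_iff)
        hence "\<beta> T \<le> 0" unfolding \<beta>_def using fin3 s0 by (simp add: mult_le_0_iff)
        moreover have "0 < cos (\<phi>0 + s' * (T - \<tau>))" using angle_ok[of T] \<tau>T by simp
        ultimately show False using comp1 True by simp
      next
        case False
        hence tsT: "ts < T" using ts by simp
        define \<phi>1 where "\<phi>1 = \<phi>0 + s' * (ts - \<tau>)"
        have zts: "\<beta> ts \<le> \<psi> ts $ 3 / c"
        proof -
          have "\<psi> ts $ 3 - c * \<beta> ts + s * \<nu> ts = \<psi> ts $ 3 * (1 - (s^2 + c^2))"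
            unfolding \<beta>_def \<nu>_def by algebra
          hence "\<psi> ts $ 3 - c * \<beta> ts = - s * \<nu> ts" using sc by simp
          moreover have "0 \<le> - s * \<nu> ts" using ts s0 by (simp add: mult_le_0_iff)
          ultimately have "\<beta> ts * c \<le> \<psi> ts $ 3" by (simp add: mult.commute)
          thus ?thesis using c0 by (simp add: pos_le_divide_eq)
        qed
        have comp2: "cos (\<phi>1 + s' * (T - ts)) < \<psi> T $ 3 / c"
        proof (rule comparison[where z="\<lambda>t. \<psi> t $ 3 / c" and z'="\<lambda>t. (A t *v \<psi> t) $ 3 / c"
              and S=S and a=ts and b=T and s=s and s'=s' and phz=\<phi>1 and t=T])
          show "ts \<le> T" by fact
          show "0 < s" by fact
          show "s < s'" by fact
          show "0 \<le> \<phi>1" unfolding \<phi>1_def using \<phi>00 s'0 ts by simp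
          have "\<phi>1 + s' * (T - ts) = \<phi>0 + s' * (T - \<tau>)" unfolding \<phi>1_def by (simp add: algebra_simps)
          thus "\<phi>1 + s' * (T - ts) < pi / 2" using keylt by simp
          show "cos \<phi>1 < \<psi> ts $ 3 / c" using comp1 zts unfolding \<phi>1_def by simp
          have "continuous_on {ts..T} \<psi>" using csub[of ts T] \<tau>0 ts by simp
          thus "continuous_on {ts..T} (\<lambda>t. \<psi> t $ 3 / c)" using c0 by (intro continuous_intros) auto
          show "finite S" by fact
          show "T \<in> {ts..T}" using tsT by simp
        next
          fix t assume t: "t \<in> {ts<..<T}" "t \<notin> S"
          have tT: "t \<in> {0<..<T}" using t \<tau>0 ts by auto
          show "DERIV (\<lambda>t. \<psi> t $ 3 / c) t :> (A t *v \<psi> t) $ 3 / c"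
            by (rule DERIV_cdivide[OF dcomp[OF tT t(2)]])
        next
          fix t assume t: "t \<in> {ts<..<T}" "t \<notin> S" "0 < \<psi> t $ 3 / c"
          have tT: "t \<in> {0<..<T}" using t \<tau>0 ts by auto
          have tT': "t \<in> {0..T}" using tT by auto
          have a3: "0 < \<psi> t $ 3" using t(3) c0 by (simp add: zero_less_divide_iff)
          have nu: "s * \<psi> t $ 3 < c * \<psi> t $ 2" using after[of t] t unfolding \<nu>_def by simp
          have "(s * \<psi> t $ 3)^2 \<le> (c * \<psi> t $ 2)^2"
            using nu a3 s0 by (intro power_mono) auto
          hence h1: "s^2 * (\<psi> t $ 3)^2 \<le> c^2 * (\<psi> t $ 2)^2" by (simp add: power_mult_distrib)
          have h0: "(s^2 + c^2) * (\<psi> t $ 3)^2 = (\<psi> t $ 3)^2" using sc by simp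
          have h2: "(\<psi> t $ 3)^2 \<le> ((\<psi> t $ 2)^2 + (\<psi> t $ 3)^2) * c^2"
            using h1 h0 by (simp add: algebra_simps)
          have "(\<psi> t $ 3 / c)^2 = (\<psi> t $ 3)^2 / c^2" by (simp add: power_divide)
          also have "\<dots> \<le> (\<psi> t $ 2)^2 + (\<psi> t $ 3)^2" using h2 c0 by (simp add: pos_divide_le_eq)
          finally have h3: "(\<psi> t $ 1)^2 \<le> 1 - (\<psi> t $ 3 / c)^2" using norm1[OF tT'] by linarith
          have sqrt0: "0 \<le> sqrt (1 - (\<psi> t $ 3 / c)^2)"
          proof -
            have "0 \<le> (\<psi> t $ 1)^2" by simp
            hence "0 \<le> 1 - (\<psi> t $ 3 / c)^2" using h3 by linarith
            thus ?thesis by simp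
          qed
          show "- s * sqrt (1 - (\<psi> t $ 3 / c)^2) \<le> (A t *v \<psi> t) $ 3 / c"
          proof (cases "A t = Xmat \<gamma>")
            case True
            have z': "(A t *v \<psi> t) $ 3 / c = - s * \<psi> t $ 1" using True X3' c0 by simp
            have "\<psi> t $ 1 \<le> sqrt (1 - (\<psi> t $ 3 / c)^2)" using h3 by (rule real_le_rsqrt)
            hence "s * \<psi> t $ 1 \<le> s * sqrt (1 - (\<psi> t $ 3 / c)^2)" using s0 by (intro mult_left_mono) auto
            thus ?thesis using z' by simp
          next
            case False
            hence AY: "A t = Ymat" using AXYo[OF tT] by simp
            have "0 \<le> s * sqrt (1 - (\<psi> t $ 3 / c)^2)" using s0 sqrt0 by simp
            thus ?thesis using AY Y3 by simp
          qed
        qed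
        moreover have "0 < cos (\<phi>1 + s' * (T - ts))"
        proof -
          have "\<phi>1 + s' * (T - ts) = \<phi>0 + s' * (T - \<tau>)" unfolding \<phi>1_def by (simp add: algebra_simps)
          thus ?thesis using angle_ok[of T] \<tau>T by simp
        qed
        ultimately show False using fin3 by simp
      qed
    qed
    thus ?thesis ..
  qed
qed

end
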